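(* Let $n\ge 3$, $p>1$, $p'=p/(p-1)$. Assume $\partial\Omega$ is smooth and $\Omega$ satisfies the exterior ball condition. Let $\phi_0\in C^2(\Omega^c)$ satisfy $\partial_i(a_{ij}\partial_j\phi_0)=0$ in $\Omega^c$, $\phi_0|_{\partial\Omega}=0$, $\phi_0(x)\to1$ as $|x|\to\infty$, and $0<\phi_0<1$ on $\Omega^c$. Let $\phi_1\in C^2(\Omega^c)$ satisfy $\partial_i(a_{ij}\partial_j\phi_1)=\phi_1$ in $\Omega^c$, $\phi_1|_{\partial\Omega}=0$, $\phi_1(x)-\int_{S^{n-1}}e^{x\cdot\omega}d\omega\to0$ as $|x|\to\infty$, and $0<\phi_1(x)\le C_1(1+|x|)^{-(n-1)/2}e^{|x|}$ on $\Omega^c$ for some $C_1>0$. Let $\psi_1(x,t)=\phi_1(x)e^{-t}$. Then there is a constant $C>0$ such that for all $t\ge0$, $$\int_{\Omega^c\cap\{|x|\le t+R\}}[\phi_0(x)]^{-1/(p-1)}[\psi_1(x,t)]^{p/(p-1)}\,dx\le C(t+R)^{n-1-(n-1)p'/2}.$$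
   Context: $\Omega\subset\mathbb{R}^n$ is a smooth compact obstacle (compact set with smooth boundary) and $\Omega^c=\mathbb{R}^n\setminus\Omega$. $R>0$ is fixed with $0\in\Omega$ and $\Omega$ compactly contained in the open ball $B_R$ of radius $R$ centered at the origin. $A(x)=(a_{ij}(x))_{i,j=1}^n$ is a smooth function on $\Omega^c$ with values in real symmetric $n\times n$ matrices, uniformly elliptic ($C^{-1}|\xi|^2\le a_{ij}(x)\xi_i\xi_j\le C|\xi|^2$), and $a_{ij}(x)=\delta_{ij}$ for $|x|\ge R$. Repeated indices are summed. The exterior ball condition on $\Omega$ means: for every $y\in\partial\Omega$ there is an open ball $B\subset\Omega^c$ with $y\in\partial B$. *)

theory Defs
  imports "HOL-Analysis.Analysis"
begin

definition pd :: "'n::finite \<Rightarrow> (real^'n \<Rightarrow> real) \<Rightarrow> real^'n \<Rightarrow> real" where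
  "pd i f x = deriv (\<lambda>t. f (x + t *\<^sub>R axis i 1)) 0"

fun Ck_on :: "nat \<Rightarrow> (real^'n::finite) set \<Rightarrow> (real^'n \<Rightarrow> real) \<Rightarrow> bool" where
  "Ck_on 0 U f = continuous_on U f"
| "Ck_on (Suc k) U f = (continuous_on U f \<and> (\<forall>x\<in>U. f differentiable (at x))
      \<and> (\<forall>i. Ck_on k U (pd i f)))"

definition smooth_on :: "(real^'n::finite) set \<Rightarrow> (real^'n \<Rightarrow> real) \<Rightarrow> bool" where
  "smooth_on U f = (\<forall>k. Ck_on k U f)"

definition smooth_boundary :: "(real^'n::finite) set \<Rightarrow> bool" where
  "smooth_boundary \<Omega> = (\<forall>y\<in>frontier \<Omega>. \<exists>U g. open U \<and> y \<in> U \<and> smooth_on U g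
      \<and> (\<forall>x\<in>U. \<exists>i. pd i g x \<noteq> 0) \<and> \<Omega> \<inter> U = {x\<in>U. g x \<le> 0})"

definition exterior_ball_condition :: "(real^'n::finite) set \<Rightarrow> bool" where
  "exterior_ball_condition \<Omega> = (\<forall>y\<in>frontier \<Omega>. \<exists>c r. r > 0 \<and> ball c r \<subseteq> - \<Omega> \<and> y \<in> sphere c r)"

definition div_op :: "(real^'n::finite \<Rightarrow> real^'n^'n) \<Rightarrow> (real^'n \<Rightarrow> real) \<Rightarrow> real^'n \<Rightarrow> real" where
  "div_op A u x = (\<Sum>i\<in>UNIV. pd i (\<lambda>y. \<Sum>j\<in>UNIV. A y $ i $ j * pd j u y) x)"

text \<open>Integral over the unit sphere S^(n-1) w.r.t. surface measure, defined via the cone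
  construction (Folland): \<integral>_S g d\<sigma> = n \<cdot> \<integral>_{B(0,1)} g(y/|y|) dy.\<close>
definition sphere_integral :: "(real^'n::finite \<Rightarrow> real) \<Rightarrow> real" where
  "sphere_integral g = real CARD('n) * integral (ball 0 1) (\<lambda>y. g (y /\<^sub>R norm y))"

end

theory Submission
  imports Defs
begin

definition qf :: "('n::finite \<Rightarrow> 'n \<Rightarrow> real) \<Rightarrow> ('n \<Rightarrow> real) \<Rightarrow> real" where
  "qf a \<xi> = (\<Sum>i\<in>UNIV. \<Sum>j\<in>UNIV. a i j * \<xi> i * \<xi> j)"

lemma sum_if_const: "(\<Sum>j\<in>A. if P then f j else 0) = (if P then sum f A else (0::real))"
  by simp

lemma qf_shift:
  assumes sym: "\<forall>i j. a i j = a j i"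
  shows "qf a (\<lambda>i. \<xi> i + (if i = k then s else 0)) = qf a \<xi> + 2 * s * (\<Sum>j\<in>UNIV. a k j * \<xi> j) + s^2 * a k k"
proof -
  have "qf a (\<lambda>i. \<xi> i + (if i = k then s else 0)) =
     (\<Sum>i\<in>UNIV. \<Sum>j\<in>UNIV. a i j * \<xi> i * \<xi> j + (if j = k then s * a i j * \<xi> i else 0)
        + (if i = k then s * a i j * \<xi> j else 0) + (if i = k then (if j = k then s^2 * a i j else 0) else 0))"
    unfolding qf_def by (intro sum.cong refl) (auto simp: algebra_simps power2_eq_square)
  also have "\<dots> = qf a \<xi> + s * (\<Sum>i\<in>UNIV. a i k * \<xi> i) + s * (\<Sum>j\<in>UNIV. a k j * \<xi> j) + s^2 * a k k"
    unfolding qf_def by (simp add: sum.distrib sum_distrib_left mult.assoc sum_if_const)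
  also have "(\<Sum>i\<in>UNIV. a i k * \<xi> i) = (\<Sum>j\<in>UNIV. a k j * \<xi> j)" using sym by metis
  finally show ?thesis by simp
qed

lemma trace_psd_aux:
  fixes h :: "'n::finite \<Rightarrow> 'n \<Rightarrow> real"
  assumes psdH: "\<forall>\<xi>. 0 \<le> qf h \<xi>" and I: "finite I"
  shows "\<forall>a. (\<forall>i j. a i j = a j i) \<longrightarrow> (\<forall>\<xi>. 0 \<le> qf a \<xi>) \<longrightarrow> (\<forall>i j. i \<notin> I \<or> j \<notin> I \<longrightarrow> a i j = 0)
     \<longrightarrow> 0 \<le> (\<Sum>i\<in>UNIV. \<Sum>j\<in>UNIV. a i j * h i j)"
  using I
proof (induction I rule: finite_induct)
  case empty
  then show ?case by simp
next
  case (insert k I)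
  show ?case
  proof (intro allI impI)
    fix a :: "'n \<Rightarrow> 'n \<Rightarrow> real"
    assume sym: "\<forall>i j. a i j = a j i" and psd: "\<forall>\<xi>. 0 \<le> qf a \<xi>"
      and supp: "\<forall>i j. i \<notin> insert k I \<or> j \<notin> insert k I \<longrightarrow> a i j = 0"
    have sh: "\<And>\<xi> s. 0 \<le> qf a \<xi> + 2 * s * (\<Sum>j\<in>UNIV. a k j * \<xi> j) + s^2 * a k k"
      using psd qf_shift[OF sym] by metis
    have akk: "a k k \<ge> 0" using sh[of "\<lambda>_. 0" 1] by (simp add: qf_def)
    show "0 \<le> (\<Sum>i\<in>UNIV. \<Sum>j\<in>UNIV. a i j * h i j)"
    proof (cases "a k k = 0")
      case True
      have b0: "(\<Sum>j\<in>UNIV. a k j * \<xi> j) = 0" for \<xi>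
      proof (rule ccontr)
        define b where "b = (\<Sum>j\<in>UNIV. a k j * \<xi> j)"
        assume "(\<Sum>j\<in>UNIV. a k j * \<xi> j) \<noteq> 0"
        hence bn: "b \<noteq> 0" by (simp add: b_def)
        have "0 \<le> qf a \<xi> + 2 * (- (qf a \<xi> + 1) / (2*b)) * b" using sh[of \<xi> "- (qf a \<xi> + 1) / (2*b)"] True
          by (simp add: b_def)
        also have "\<dots> = -1" using bn by (simp add: field_simps)
        finally show False by simp
      qed
      have akj: "a k j = 0" for j using b0[of "\<lambda>i. if i = j then 1 else 0"]
        by (simp add: if_distrib sum.If_cases)
      have "\<forall>i j. i \<notin> I \<or> j \<notin> I \<longrightarrow> a i j = 0"
        using supp akj sym by (metis insert_iff)
      then show ?thesis using insert.IH sym psd by blast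
    next
      case False
      hence akp: "a k k > 0" using akk by simp
      define a' where "a' i j = a i j - a i k * a k j / a k k" for i j
      have sym': "\<forall>i j. a' i j = a' j i" using sym unfolding a'_def by (metis mult.commute)
      have psd': "0 \<le> qf a' \<xi>" for \<xi>
      proof -
        define b where "b = (\<Sum>j\<in>UNIV. a k j * \<xi> j)"
        have e: "qf a' \<xi> = qf a \<xi> - b^2 / a k k"
        proof -
          have "qf a' \<xi> = qf a \<xi> - (\<Sum>i\<in>UNIV. \<Sum>j\<in>UNIV. (a i k * \<xi> i) * (a k j * \<xi> j)) / a k k"
            unfolding qf_def a'_def by (simp add: algebra_simps sum_subtractf sum_divide_distrib)
          also have "(\<Sum>i\<in>UNIV. \<Sum>j\<in>UNIV. (a i k * \<xi> i) * (a k j * \<xi> j)) = (\<Sum>i\<in>UNIV. a i k * \<xi> i) * b"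
            by (simp add: b_def sum_product)
          also have "(\<Sum>i\<in>UNIV. a i k * \<xi> i) = b" using sym by (simp add: b_def)
          finally show ?thesis by (simp add: power2_eq_square)
        qed
        have "0 \<le> qf a \<xi> + 2 * (- b / a k k) * b + (- b / a k k)^2 * a k k"
          using sh[of \<xi> "- b / a k k"] by (simp add: b_def)
        also have "\<dots> = qf a \<xi> - b^2 / a k k" using akp by (simp add: field_simps power2_eq_square)
        finally show ?thesis using e by simp
      qed
      have supp': "\<forall>i j. i \<notin> I \<or> j \<notin> I \<longrightarrow> a' i j = 0"
      proof (intro allI impI)
        fix i j assume ij: "i \<notin> I \<or> j \<notin> I"
        show "a' i j = 0"
        proof (cases "i = k")
          case True thus ?thesis using akp by (simp add: a'_def)
        next
          case ik: False
          show ?thesis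
          proof (cases "j = k")
            case True thus ?thesis using akp sym by (simp add: a'_def)
          next
            case False
            hence "a i j = 0" "a i k = 0 \<or> a k j = 0" using ij ik supp by auto
            thus ?thesis by (auto simp: a'_def)
          qed
        qed
      qed
      have IH: "0 \<le> (\<Sum>i\<in>UNIV. \<Sum>j\<in>UNIV. a' i j * h i j)" using insert.IH sym' psd' supp' by blast
      have hu: "0 \<le> qf h (\<lambda>i. a i k)" using psdH by blast
      have "(\<Sum>i\<in>UNIV. \<Sum>j\<in>UNIV. a i j * h i j) = (\<Sum>i\<in>UNIV. \<Sum>j\<in>UNIV. a' i j * h i j) + qf h (\<lambda>i. a i k) / a k k"
        unfolding a'_def qf_def using sym
        by (simp add: algebra_simps sum_subtractf sum_divide_distrib sum.distrib)
      then show ?thesis using IH hu akp by simp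
    qed
  qed
qed

lemma trace_psd:
  fixes a h :: "'n::finite \<Rightarrow> 'n \<Rightarrow> real"
  assumes "\<forall>i j. a i j = a j i" "\<forall>\<xi>. 0 \<le> qf a \<xi>" "\<forall>\<xi>. 0 \<le> qf h \<xi>"
  shows "0 \<le> (\<Sum>i\<in>UNIV. \<Sum>j\<in>UNIV. a i j * h i j)"
  using trace_psd_aux[OF assms(3), of UNIV] assms(1,2) by simp

lemma pd_hasder:
  assumes "(f has_derivative f') (at x)"
  shows "pd i f x = f' (axis i 1)"
proof -
  have l: "linear f'" using assms has_derivative_linear by blast
  have "((\<lambda>t. x + t *\<^sub>R axis i 1) has_derivative (\<lambda>t. t *\<^sub>R axis i 1)) (at 0)"
    by (auto intro!: derivative_eq_intros)
  from has_derivative_compose[OF this, of f f'] assms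
  have "((\<lambda>t. f (x + t *\<^sub>R axis i 1)) has_derivative (\<lambda>t. f' (t *\<^sub>R axis i 1))) (at 0)" by simp
  moreover have "(\<lambda>t. f' (t *\<^sub>R axis i 1)) = (*) (f' (axis i 1))"
    by (rule ext) (simp add: linear_scale[OF l])
  ultimately have "((\<lambda>t. f (x + t *\<^sub>R axis i 1)) has_field_derivative f' (axis i 1)) (at 0)"
    by (simp add: has_field_derivative_def)
  thus ?thesis unfolding pd_def by (rule DERIV_imp_deriv)
qed

lemma pd_frechet:
  assumes "f differentiable (at x)"
  shows "pd i f x = frechet_derivative f (at x) (axis i 1)"
  using pd_hasder[OF frechet_derivative_works[THEN iffD1, OF assms]] .

lemma linear_expand:
  fixes f' :: "real^'n \<Rightarrow> real"
  assumes "linear f'"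
  shows "f' v = (\<Sum>j\<in>UNIV. v $ j * f' (axis j 1))"
proof -
  have "f' v = f' (\<Sum>j\<in>UNIV. v $ j *\<^sub>R axis j 1)"
    using basis_expansion[of v] by (simp add: scalar_mult_eq_scaleR)
  also have "\<dots> = (\<Sum>j\<in>UNIV. v $ j * f' (axis j 1))"
    using assms by (simp add: linear_sum linear_scale)
  finally show ?thesis .
qed

lemma hasder_pd:
  fixes f :: "real^'n \<Rightarrow> real"
  assumes "f differentiable (at x)"
  shows "(f has_derivative (\<lambda>v. \<Sum>j\<in>UNIV. v $ j * pd j f x)) (at x)"
proof -
  have d: "(f has_derivative frechet_derivative f (at x)) (at x)"
    using assms frechet_derivative_works by blast
  have "frechet_derivative f (at x) = (\<lambda>v. \<Sum>j\<in>UNIV. v $ j * pd j f x)"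
  proof
    fix v
    show "frechet_derivative f (at x) v = (\<Sum>j\<in>UNIV. v $ j * pd j f x)"
      by (subst linear_expand[OF has_derivative_linear[OF d]]) (simp add: pd_frechet[OF assms])
  qed
  thus ?thesis using d by simp
qed

lemma axis_sum: "(\<Sum>k\<in>UNIV. axis i (1::real) $ k * c k) = c i"
proof -
  have "(\<Sum>k\<in>UNIV. axis i (1::real) $ k * c k) = (\<Sum>k\<in>UNIV. if k = i then c k else 0)"
  proof (intro sum.cong refl)
    fix k show "axis i (1::real) $ k * c k = (if k = i then c k else 0)"
      by (cases "k = i") (simp_all add: axis_def)
  qed
  also have "\<dots> = c i" by (subst sum.delta) auto
  finally show ?thesis .
qed

lemma div_expand:
  fixes A :: "real^'n \<Rightarrow> real^'n^'n"
  assumes dA: "\<forall>i j. (\<lambda>y. A y $ i $ j) differentiable (at x)"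
    and du: "\<forall>j. pd j u differentiable (at x)"
  shows "div_op A u x = (\<Sum>i\<in>UNIV. \<Sum>j\<in>UNIV. pd i (\<lambda>y. A y $ i $ j) x * pd j u x + A x $ i $ j * pd i (pd j u) x)"
proof -
  have eq: "pd i (\<lambda>y. \<Sum>j\<in>UNIV. A y $ i $ j * pd j u y) x =
        (\<Sum>j\<in>UNIV. pd i (\<lambda>y. A y $ i $ j) x * pd j u x + A x $ i $ j * pd i (pd j u) x)" for i
  proof -
    have "((\<lambda>y. \<Sum>j\<in>UNIV. A y $ i $ j * pd j u y) has_derivative
      (\<lambda>v. \<Sum>j\<in>UNIV. A x $ i $ j * (\<Sum>k\<in>UNIV. v $ k * pd k (pd j u) x)
                      + (\<Sum>k\<in>UNIV. v $ k * pd k (\<lambda>y. A y $ i $ j) x) * pd j u x)) (at x)"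
    proof (rule has_derivative_sum)
      fix j :: 'n
      have d1: "((\<lambda>y. A y $ i $ j) has_derivative (\<lambda>v. \<Sum>k\<in>UNIV. v $ k * pd k (\<lambda>y. A y $ i $ j) x)) (at x)"
        using dA by (intro hasder_pd) blast
      have d2: "(pd j u has_derivative (\<lambda>v. \<Sum>k\<in>UNIV. v $ k * pd k (pd j u) x)) (at x)"
        using du by (intro hasder_pd) blast
      show "((\<lambda>y. A y $ i $ j * pd j u y) has_derivative
         (\<lambda>v. A x $ i $ j * (\<Sum>k\<in>UNIV. v $ k * pd k (pd j u) x)
                      + (\<Sum>k\<in>UNIV. v $ k * pd k (\<lambda>y. A y $ i $ j) x) * pd j u x)) (at x)"
        by (rule has_derivative_mult[OF d1 d2])
    qed
    from pd_hasder[OF this, of i]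
    have "pd i (\<lambda>y. \<Sum>j\<in>UNIV. A y $ i $ j * pd j u y) x = (\<Sum>j\<in>UNIV. A x $ i $ j * pd i (pd j u) x + pd i (\<lambda>y. A y $ i $ j) x * pd j u x)"
      by (simp only: axis_sum)
    also have "\<dots> = (\<Sum>j\<in>UNIV. pd i (\<lambda>y. A y $ i $ j) x * pd j u x + A x $ i $ j * pd i (pd j u) x)"
      by (intro sum.cong refl) (simp add: add.commute)
    finally show ?thesis .
  qed
  show ?thesis unfolding div_op_def by (simp only: eq)
qed

lemma second_deriv_min:
  fixes h h' :: "real \<Rightarrow> real"
  assumes "\<delta> > 0" "\<forall>s. \<bar>s\<bar> < \<delta> \<longrightarrow> h s \<ge> h 0"
    "\<forall>s. \<bar>s\<bar> < \<delta> \<longrightarrow> (h has_real_derivative h' s) (at s)"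
    "(h' has_real_derivative d) (at 0)" "h' 0 = 0"
  shows "d \<ge> 0"
proof (rule ccontr)
  assume "\<not> d \<ge> 0"
  then obtain e where e: "e > 0" "\<forall>s>0. s < e \<longrightarrow> h' 0 > h' (0 + s)"
    using DERIV_neg_dec_right[OF assms(4)] by force
  define s where "s = min e \<delta> / 2"
  have s: "0 < s" "s < e" "s < \<delta>" using e assms(1) by (auto simp: s_def)
  have "\<forall>x. 0 \<le> x \<and> x \<le> s \<longrightarrow> (h has_real_derivative h' x) (at x)" using assms(3) s by auto
  then obtain z where z: "0 < z" "z < s" "h s - h 0 = (s - 0) * h' z"
    using MVT2[of 0 s h h'] s by auto
  have "h' z < 0" using e(2)[rule_format, of z] z s assms(5) by simp
  hence "h s < h 0" using z s mult_pos_neg[of s "h' z"] by simp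
  moreover have "h s \<ge> h 0" using assms(2)[rule_format, of s] s by simp
  ultimately show False by linarith
qed

lemma Ck2_D:
  assumes "Ck_on 2 U f" "x \<in> U"
  shows "f differentiable (at x)" "pd j f differentiable (at x)" "continuous_on U f"
  using assms by (auto simp: numeral_2_eq_2)

lemma line_deriv:
  fixes F :: "real^'n \<Rightarrow> real"
  assumes "(F has_derivative (\<lambda>v. \<Sum>j\<in>UNIV. v $ j * G j)) (at (x + s *\<^sub>R \<xi>))"
  shows "((\<lambda>s. F (x + s *\<^sub>R \<xi>)) has_real_derivative (\<Sum>j\<in>UNIV. \<xi> $ j * G j)) (at s)"
proof -
  have "((\<lambda>s. x + s *\<^sub>R \<xi>) has_derivative (\<lambda>t. t *\<^sub>R \<xi>)) (at s)"
    by (auto intro!: derivative_eq_intros)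
  from has_derivative_compose[OF this assms]
  have "((\<lambda>s. F (x + s *\<^sub>R \<xi>)) has_derivative (\<lambda>t. \<Sum>j\<in>UNIV. (t *\<^sub>R \<xi>) $ j * G j)) (at s)" by simp
  moreover have "(\<lambda>t. \<Sum>j\<in>UNIV. (t *\<^sub>R \<xi>) $ j * G j) = (*) (\<Sum>j\<in>UNIV. \<xi> $ j * G j)"
    by (rule ext) (simp add: sum_distrib_left mult.assoc mult.commute mult.left_commute)
  ultimately show ?thesis by (simp add: has_field_derivative_def)
qed

lemma comparison:
  fixes \<Omega> :: "(real^'n) set" and R :: real
    and A :: "real^'n \<Rightarrow> real^'n^'n" and \<phi>0 \<phi>1 :: "real^'n \<Rightarrow> real"
  assumes Omega_compact: "compact \<Omega>" and R: "R > 0" and Omega_sub: "\<Omega> \<subseteq> ball 0 R"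
    and dA: "\<forall>x\<in>- \<Omega>. \<forall>i j. (\<lambda>y. A y $ i $ j) differentiable (at x)"
    and A_sym: "\<forall>x\<in>- \<Omega>. \<forall>i j. A x $ i $ j = A x $ j $ i"
    and A_psd: "\<forall>x\<in>- \<Omega>. \<forall>\<xi>::real^'n. 0 \<le> (\<Sum>i\<in>UNIV. \<Sum>j\<in>UNIV. A x $ i $ j * \<xi> $ i * \<xi> $ j)"
    and phi0_C2: "Ck_on 2 (- \<Omega>) \<phi>0" and phi0_cont: "continuous_on (closure (- \<Omega>)) \<phi>0"
    and phi0_eq: "\<forall>x\<in>- \<Omega>. div_op A \<phi>0 x = 0"
    and phi0_bd: "\<forall>x\<in>frontier \<Omega>. \<phi>0 x = 0"
    and phi0_pos: "\<forall>x\<in>- \<Omega>. 0 < \<phi>0 x"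
    and phi1_C2: "Ck_on 2 (- \<Omega>) \<phi>1" and phi1_cont: "continuous_on (closure (- \<Omega>)) \<phi>1"
    and phi1_eq: "\<forall>x\<in>- \<Omega>. div_op A \<phi>1 x = \<phi>1 x"
    and phi1_bd: "\<forall>x\<in>frontier \<Omega>. \<phi>1 x = 0"
    and phi1_pos: "\<forall>x\<in>- \<Omega>. 0 < \<phi>1 x"
  shows "\<exists>K>0. \<forall>x\<in>- \<Omega>. norm x \<le> R \<longrightarrow> \<phi>1 x \<le> K * \<phi>0 x"
proof -
  have opn: "open (- \<Omega>)" using Omega_compact compact_imp_closed by blast
  have sph: "sphere 0 R \<subseteq> - \<Omega>" using Omega_sub by auto
  have "continuous_on (sphere 0 R) (\<lambda>x. \<phi>1 x / \<phi>0 x)"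
  proof (intro continuous_on_divide ballI)
    have sc: "sphere 0 R \<subseteq> closure (- \<Omega>)" using sph closure_subset by blast
    show "continuous_on (sphere 0 R) \<phi>1" by (rule continuous_on_subset[OF phi1_cont sc])
    show "continuous_on (sphere 0 R) \<phi>0" by (rule continuous_on_subset[OF phi0_cont sc])
    fix x :: "real^'n" assume "x \<in> sphere 0 R" thus "\<phi>0 x \<noteq> 0" using phi0_pos sph by force
  qed
  hence "bounded ((\<lambda>x. \<phi>1 x / \<phi>0 x) ` sphere 0 R)"
    by (intro compact_imp_bounded compact_continuous_image) auto
  then obtain B where B: "\<forall>x\<in>sphere 0 R. norm (\<phi>1 x / \<phi>0 x) \<le> B"
    unfolding bounded_iff by auto
  define K where "K = max 1 B"
  have Kpos: "K > 0" by (simp add: K_def)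
  have Ksph: "\<phi>1 x \<le> K * \<phi>0 x" if "x \<in> sphere 0 R" for x
  proof -
    have p0: "\<phi>0 x > 0" using phi0_pos sph that by auto
    have "norm (\<phi>1 x / \<phi>0 x) \<le> B" using B that by blast
    hence "\<phi>1 x / \<phi>0 x \<le> B" by (metis abs_ge_self order_trans real_norm_def)
    hence "\<phi>1 x / \<phi>0 x \<le> K" unfolding K_def by linarith
    thus ?thesis using p0 by (simp add: divide_le_eq mult.commute)
  qed
  define w where "w x = K * \<phi>0 x - \<phi>1 x" for x
  define D where "D = closure (- \<Omega>) \<inter> cball 0 R"
  have Dc: "compact D" unfolding D_def by (intro closed_Int_compact) auto
  have wc: "continuous_on D w" unfolding w_def D_def
    using phi0_cont phi1_cont by (intro continuous_on_diff continuous_on_mult continuous_on_const) (auto intro: continuous_on_subset)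
  have "\<phi>1 x \<le> K * \<phi>0 x" if x: "x \<in> - \<Omega>" "norm x \<le> R" for x
  proof (rule ccontr)
    assume neg: "\<not> \<phi>1 x \<le> K * \<phi>0 x"
    have xD: "x \<in> D" using x closure_subset[of "- \<Omega>"] unfolding D_def by auto
    then obtain x0 where x0: "x0 \<in> D" "\<forall>y\<in>D. w x0 \<le> w y"
      using continuous_attains_inf[OF Dc _ wc] by blast
    have wneg: "w x0 < 0" using x0(2) xD neg unfolding w_def by force
    have x0O: "x0 \<in> - \<Omega>"
    proof (rule ccontr)
      assume "x0 \<notin> - \<Omega>"
      hence "x0 \<in> frontier \<Omega>" using x0(1) unfolding D_def frontier_def closure_complement
        using closure_subset[of "\<Omega>"] by auto
      thus False using wneg phi0_bd phi1_bd unfolding w_def by auto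
    qed
    have x0R: "norm x0 < R"
    proof (rule ccontr)
      assume "\<not> norm x0 < R"
      hence "x0 \<in> sphere 0 R" using x0(1) unfolding D_def by auto
      thus False using Ksph wneg unfolding w_def by force
    qed
    define U where "U = - \<Omega> \<inter> ball 0 R"
    have Uo: "open U" "x0 \<in> U" using opn x0O x0R unfolding U_def by auto
    have UD: "U \<subseteq> D" unfolding U_def D_def using closure_subset[of "- \<Omega>"] by auto
    have wmin: "\<forall>y\<in>U. w x0 \<le> w y" using x0(2) UD by auto
    obtain \<delta>0 where d0: "\<delta>0 > 0" "ball x0 \<delta>0 \<subseteq> U" using Uo open_contains_ball by blast
    define g where "g j y = K * pd j \<phi>0 y - pd j \<phi>1 y" for j y
    define H where "H i j = K * pd i (pd j \<phi>0) x0 - pd i (pd j \<phi>1) x0" for i j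
    have wder: "(w has_derivative (\<lambda>v. \<Sum>j\<in>UNIV. v $ j * g j y)) (at y)" if "y \<in> - \<Omega>" for y
    proof -
      have "(w has_derivative (\<lambda>v. K * (\<Sum>j\<in>UNIV. v $ j * pd j \<phi>0 y) - (\<Sum>j\<in>UNIV. v $ j * pd j \<phi>1 y))) (at y)"
        unfolding w_def using Ck2_D(1)[OF phi0_C2 that] Ck2_D(1)[OF phi1_C2 that]
        by (intro has_derivative_diff has_derivative_mult_right hasder_pd)
      moreover have "(\<lambda>v. K * (\<Sum>j\<in>UNIV. v $ j * pd j \<phi>0 y) - (\<Sum>j\<in>UNIV. v $ j * pd j \<phi>1 y)) = (\<lambda>v. \<Sum>j\<in>UNIV. v $ j * g j y)"
        by (rule ext) (simp add: g_def sum_distrib_left sum_subtractf[symmetric] algebra_simps)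
      ultimately show ?thesis by simp
    qed
    have gder: "(g j has_derivative (\<lambda>v. \<Sum>i\<in>UNIV. v $ i * H i j)) (at x0)" for j
    proof -
      have "(g j has_derivative (\<lambda>v. K * (\<Sum>i\<in>UNIV. v $ i * pd i (pd j \<phi>0) x0) - (\<Sum>i\<in>UNIV. v $ i * pd i (pd j \<phi>1) x0))) (at x0)"
        unfolding g_def using Ck2_D(2)[OF phi0_C2 x0O] Ck2_D(2)[OF phi1_C2 x0O]
        by (intro has_derivative_diff has_derivative_mult_right hasder_pd)
      moreover have "(\<lambda>v. K * (\<Sum>i\<in>UNIV. v $ i * pd i (pd j \<phi>0) x0) - (\<Sum>i\<in>UNIV. v $ i * pd i (pd j \<phi>1) x0)) = (\<lambda>v. \<Sum>i\<in>UNIV. v $ i * H i j)"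
        by (rule ext) (simp add: H_def sum_distrib_left sum_subtractf[symmetric] algebra_simps)
      ultimately show ?thesis by simp
    qed
    have g0: "g j x0 = 0" for j
    proof -
      have der: "((\<lambda>s. w (x0 + s *\<^sub>R axis j 1)) has_real_derivative (\<Sum>k\<in>UNIV. axis j 1 $ k * g k x0)) (at 0)"
        using line_deriv[of w "\<lambda>k. g k x0" x0 0 "axis j 1"] wder[OF x0O] by simp
      have mn: "\<forall>s. \<bar>0 - s\<bar> < \<delta>0 \<longrightarrow> w (x0 + 0 *\<^sub>R axis j 1) \<le> w (x0 + s *\<^sub>R axis j 1)"
      proof (intro allI impI)
        fix s :: real assume "\<bar>0 - s\<bar> < \<delta>0"
        hence "x0 + s *\<^sub>R axis j 1 \<in> ball x0 \<delta>0" by (simp add: dist_norm)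
        thus "w (x0 + 0 *\<^sub>R axis j 1) \<le> w (x0 + s *\<^sub>R axis j 1)" using wmin d0 by auto
      qed
      from DERIV_local_min[OF der d0(1) mn] show ?thesis by (simp only: axis_sum)
    qed
    have Hpsd: "0 \<le> qf H \<xi>" for \<xi>
    proof -
      define v :: "real^'n" where "v = (\<chi> i. \<xi> i)"
      define \<delta> where "\<delta> = \<delta>0 / (norm v + 1)"
      have nv: "norm v + 1 > 0" "norm v + 1 \<noteq> 0" using norm_ge_zero[of v] by linarith+
      have \<delta>: "\<delta> > 0" using d0 nv by (simp add: \<delta>_def)
      have inb: "x0 + s *\<^sub>R v \<in> U" if "\<bar>s\<bar> < \<delta>" for s
      proof -
        have "\<bar>s\<bar> * norm v \<le> \<bar>s\<bar> * (norm v + 1)" by (simp add: mult_left_mono)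
        also have "\<dots> < \<delta> * (norm v + 1)" using that nv by (intro mult_strict_right_mono) auto
        also have "\<dots> = \<delta>0" unfolding \<delta>_def using nv by simp
        finally have "norm (s *\<^sub>R v) < \<delta>0" by simp
        thus ?thesis using d0 by (auto simp: dist_norm)
      qed
      define h' where "h' s = (\<Sum>j\<in>UNIV. v $ j * g j (x0 + s *\<^sub>R v))" for s
      have hmin: "\<forall>s. \<bar>s\<bar> < \<delta> \<longrightarrow> w (x0 + s *\<^sub>R v) \<ge> w (x0 + 0 *\<^sub>R v)"
        using inb wmin by auto
      have hder: "\<forall>s. \<bar>s\<bar> < \<delta> \<longrightarrow> ((\<lambda>s. w (x0 + s *\<^sub>R v)) has_real_derivative h' s) (at s)"
        unfolding h'_def using inb U_def wder by (auto intro!: line_deriv)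
      have "((\<lambda>s. g j (x0 + s *\<^sub>R v)) has_real_derivative (\<Sum>i\<in>UNIV. v $ i * H i j)) (at 0)" for j
        using line_deriv[of "g j" "\<lambda>i. H i j" x0 0 v] gder[of j] by simp
      hence h'der: "(h' has_real_derivative (\<Sum>j\<in>UNIV. v $ j * (\<Sum>i\<in>UNIV. v $ i * H i j))) (at 0)"
        unfolding h'_def by (intro DERIV_sum DERIV_cmult) auto
      have h'0: "h' 0 = 0" unfolding h'_def using g0 by simp
      have "0 \<le> (\<Sum>j\<in>UNIV. v $ j * (\<Sum>i\<in>UNIV. v $ i * H i j))"
        using second_deriv_min[OF \<delta> _ hder h'der h'0] hmin by simp
      also have "\<dots> = qf H \<xi>" unfolding qf_def v_def
        by (simp add: sum_distrib_left algebra_simps) (subst sum.swap, simp add: mult.left_commute)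
      finally show ?thesis .
    qed
    have apsd: "0 \<le> qf (\<lambda>i j. A x0 $ i $ j) \<xi>" for \<xi>
    proof -
      have "0 \<le> (\<Sum>i\<in>UNIV. \<Sum>j\<in>UNIV. A x0 $ i $ j * (\<chi> i. \<xi> i) $ i * (\<chi> i. \<xi> i) $ j)"
        using A_psd x0O by blast
      thus ?thesis by (simp add: qf_def)
    qed
    have tr: "0 \<le> (\<Sum>i\<in>UNIV. \<Sum>j\<in>UNIV. A x0 $ i $ j * H i j)"
      using trace_psd[of "\<lambda>i j. A x0 $ i $ j" H] A_sym x0O apsd Hpsd by auto
    have e0: "div_op A \<phi>0 x0 = (\<Sum>i\<in>UNIV. \<Sum>j\<in>UNIV. pd i (\<lambda>y. A y $ i $ j) x0 * pd j \<phi>0 x0 + A x0 $ i $ j * pd i (pd j \<phi>0) x0)"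
      using div_expand dA x0O Ck2_D(2)[OF phi0_C2 x0O] by blast
    have e1: "div_op A \<phi>1 x0 = (\<Sum>i\<in>UNIV. \<Sum>j\<in>UNIV. pd i (\<lambda>y. A y $ i $ j) x0 * pd j \<phi>1 x0 + A x0 $ i $ j * pd i (pd j \<phi>1) x0)"
      using div_expand dA x0O Ck2_D(2)[OF phi1_C2 x0O] by blast
    have p1: "pd j \<phi>1 x0 = K * pd j \<phi>0 x0" for j using g0[of j] by (simp add: g_def)
    have "K * div_op A \<phi>0 x0 - div_op A \<phi>1 x0 = (\<Sum>i\<in>UNIV. \<Sum>j\<in>UNIV. A x0 $ i $ j * H i j)"
      unfolding e0 e1 H_def by (simp add: p1 sum_distrib_left sum_subtractf[symmetric] algebra_simps)
    moreover have "K * div_op A \<phi>0 x0 - div_op A \<phi>1 x0 = - \<phi>1 x0" using phi0_eq phi1_eq x0O by simp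
    ultimately show False using tr phi1_pos x0O by force
  qed
  thus ?thesis using Kpos by blast
qed

lemma meas_cball:
  assumes "r \<ge> 0"
  shows "measure lebesgue (cball (0::real^'n) r) = r ^ CARD('n) * measure lborel (ball (0::real^'n) 1)"
proof -
  have "measure lebesgue (cball (0::real^'n) r) = measure lborel (cball (0::real^'n) r)"
    by (rule measure_completion) simp
  also have "\<dots> = measure lborel (ball (0::real^'n) r)" by (rule content_cball_conv_ball)
  also have "\<dots> = r ^ CARD('n) * measure lborel (ball (0::real^'n) 1)"
    using content_ball_conv_unit_ball[OF assms, of "0::real^'n"] by simp
  finally show ?thesis .
qed

lemma power_diff_le:
  fixes a b :: real
  assumes "0 \<le> b" "b \<le> a" "m \<ge> 1"
  shows "a ^ m - b ^ m \<le> m * a ^ (m - 1) * (a - b)"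
proof -
  have "a ^ m - b ^ m = (a - b) * (\<Sum>i<m. b ^ (m - Suc i) * a ^ i)"
    by (rule power_diff_sumr2)
  also have "(\<Sum>i<m. b ^ (m - Suc i) * a ^ i) \<le> (\<Sum>i<m. a ^ (m - 1))"
  proof (rule sum_mono)
    fix i assume "i \<in> {..<m}"
    hence "b ^ (m - Suc i) * a ^ i \<le> a ^ (m - Suc i) * a ^ i"
      using assms by (intro mult_right_mono power_mono) auto
    also have "\<dots> = a ^ (m - 1)" using \<open>i \<in> {..<m}\<close> by (simp add: power_add[symmetric])
    finally show "b ^ (m - Suc i) * a ^ i \<le> a ^ (m - 1)" .
  qed
  hence "(a - b) * (\<Sum>i<m. b ^ (m - Suc i) * a ^ i) \<le> (a - b) * (\<Sum>i<m. a ^ (m - 1))"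
    using assms by (intro mult_left_mono) auto
  finally show ?thesis by (simp add: algebra_simps)
qed

lemma D_bound:
  fixes T R0 \<gamma> :: real and k :: nat
  assumes "R0 > 0" "T \<ge> R0"
  shows "(if T - k \<ge> 1 then (T - k) powr \<gamma> else 1) \<le> max 1 (R0 powr (- \<gamma>)) * (T powr \<gamma> * (1 + real k) powr \<bar>\<gamma>\<bar>)"
proof -
  have T0: "T > 0" using assms by linarith
  have k1: "(1 + real k) powr \<bar>\<gamma>\<bar> \<ge> 1" by (rule ge_one_powr_ge_zero) auto
  have Tg: "T powr \<gamma> > 0" using T0 by simp
  show ?thesis
  proof (cases "T - k \<ge> 1")
    case True
    have "(T - k) powr \<gamma> \<le> T powr \<gamma> * (1 + real k) powr \<bar>\<gamma>\<bar>"
    proof (cases "\<gamma> \<ge> 0")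
      case True
      have "(T - k) powr \<gamma> \<le> T powr \<gamma>" using \<open>T - k \<ge> 1\<close> True by (intro powr_mono2) auto
      also have "\<dots> \<le> T powr \<gamma> * (1 + real k) powr \<bar>\<gamma>\<bar>" using k1 Tg by simp
      finally show ?thesis .
    next
      case False
      have le: "T / (1 + real k) \<le> T - k"
      proof -
        have "T \<le> (1 + real k) * (T - k)" using \<open>T - k \<ge> 1\<close> mult_right_mono[of "1 + real k" T "real k"] by (simp add: algebra_simps)
        thus ?thesis by (simp add: divide_le_eq mult.commute)
      qed
      have "(T - k) powr \<gamma> \<le> (T / (1 + real k)) powr \<gamma>" using False le T0 by (intro powr_mono2') auto
      also have "\<dots> = T powr \<gamma> / (1 + real k) powr \<gamma>" using T0 by (simp add: powr_divide)
      also have "\<dots> = T powr \<gamma> * (1 + real k) powr \<bar>\<gamma>\<bar>" using False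
        by (simp add: powr_minus_divide)
      finally show ?thesis .
    qed
    also have "\<dots> \<le> max 1 (R0 powr (- \<gamma>)) * (T powr \<gamma> * (1 + real k) powr \<bar>\<gamma>\<bar>)"
      using Tg k1 mult_right_mono[of 1 "max 1 (R0 powr (- \<gamma>))" "T powr \<gamma> * (1 + real k) powr \<bar>\<gamma>\<bar>"] by simp
    finally show ?thesis using True by simp
  next
    case False
    hence kT: "1 + real k > T" by linarith
    have "1 \<le> T powr \<gamma> * (1 + real k) powr \<bar>\<gamma>\<bar> \<or> 1 \<le> R0 powr (- \<gamma>) * (T powr \<gamma> * (1 + real k) powr \<bar>\<gamma>\<bar>)"
    proof (cases "\<gamma> \<ge> 0")
      case True
      have "R0 powr \<gamma> \<le> T powr \<gamma>" using assms True by (intro powr_mono2) auto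
      hence "1 \<le> R0 powr (- \<gamma>) * T powr \<gamma>" using assms by (simp add: powr_minus divide_le_eq field_simps)
      also have "\<dots> \<le> R0 powr (- \<gamma>) * (T powr \<gamma> * (1 + real k) powr \<bar>\<gamma>\<bar>)" using k1 Tg
        by (intro mult_left_mono) auto
      finally show ?thesis by blast
    next
      case False
      have "((1 + real k) / T) powr (- \<gamma>) = (1 + real k) powr (- \<gamma>) / T powr (- \<gamma>)"
        using T0 by (simp add: powr_divide)
      also have "\<dots> = T powr \<gamma> * (1 + real k) powr \<bar>\<gamma>\<bar>" using False
        by (simp add: powr_minus_divide)
      finally have "T powr \<gamma> * (1 + real k) powr \<bar>\<gamma>\<bar> = ((1 + real k) / T) powr (- \<gamma>)" by simp
      also have "\<dots> \<ge> 1" using kT T0 False by (intro ge_one_powr_ge_zero) (auto simp: field_simps)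
      finally show ?thesis by blast
    qed
    moreover have "T powr \<gamma> * (1 + real k) powr \<bar>\<gamma>\<bar> \<le> max 1 (R0 powr (- \<gamma>)) * (T powr \<gamma> * (1 + real k) powr \<bar>\<gamma>\<bar>)"
      using Tg k1 mult_right_mono[of 1 "max 1 (R0 powr (- \<gamma>))" "T powr \<gamma> * (1 + real k) powr \<bar>\<gamma>\<bar>"] by simp
    moreover have "R0 powr (- \<gamma>) * (T powr \<gamma> * (1 + real k) powr \<bar>\<gamma>\<bar>) \<le> max 1 (R0 powr (- \<gamma>)) * (T powr \<gamma> * (1 + real k) powr \<bar>\<gamma>\<bar>)"
      using Tg k1 by (intro mult_right_mono) auto
    ultimately show ?thesis using False by auto
  qed
qed

lemma expsum_bound:
  fixes q a :: real
  assumes q: "q > 0" and a: "a \<ge> 0"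
  shows "\<exists>S0>0. \<forall>N. (\<Sum>k\<le>N. exp (- q * k) * (1 + real k) powr a) \<le> S0"
proof -
  define \<epsilon> where "\<epsilon> = min 1 (q / (2 * a + 1))"
  have e0: "\<epsilon> > 0" "\<epsilon> \<le> 1" using q a by (auto simp: \<epsilon>_def)
  have ae: "a * \<epsilon> \<le> q / 2"
  proof -
    have "a * \<epsilon> \<le> a * (q / (2 * a + 1))" using a by (intro mult_left_mono) (auto simp: \<epsilon>_def)
    also have "\<dots> \<le> q / 2" using a q by (simp add: field_simps)
    finally show ?thesis .
  qed
  define r where "r = exp (- q / 2)"
  have r: "0 < r" "r < 1" using q by (auto simp: r_def)
  have tm: "exp (- q * k) * (1 + real k) powr a \<le> \<epsilon> powr (- a) * r ^ k" for k :: nat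
  proof -
    have "\<epsilon> * (1 + real k) \<le> 1 + \<epsilon> * k" using e0 by (simp add: algebra_simps)
    also have "\<dots> \<le> exp (\<epsilon> * k)" by (rule exp_ge_add_one_self)
    finally have "1 + real k \<le> exp (\<epsilon> * k) / \<epsilon>" using e0 by (simp add: field_simps)
    hence "(1 + real k) powr a \<le> (exp (\<epsilon> * k) / \<epsilon>) powr a" using a by (intro powr_mono2) auto
    also have "\<dots> = exp (a * (\<epsilon> * k)) * \<epsilon> powr (- a)"
      using e0 by (simp add: powr_divide powr_minus_divide exp_powr_real mult.commute)
    finally have "exp (- q * k) * (1 + real k) powr a \<le> exp (- q * k) * (exp (a * (\<epsilon> * k)) * \<epsilon> powr (- a))"
      by (intro mult_left_mono) auto
    also have "\<dots> = \<epsilon> powr (- a) * exp (- q * k + a * \<epsilon> * k)"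
      by (simp only: exp_add mult.assoc mult.commute mult.left_commute)
    also have "\<dots> \<le> \<epsilon> powr (- a) * exp (real k * (- q / 2))"
    proof -
      have "a * \<epsilon> * k \<le> q / 2 * k" using ae by (intro mult_right_mono) auto
      thus ?thesis by (intro mult_left_mono) (auto simp: algebra_simps)
    qed
    also have "\<dots> = \<epsilon> powr (- a) * r ^ k" unfolding r_def by (simp only: exp_of_nat_mult)
    finally show ?thesis .
  qed
  define S0 where "S0 = \<epsilon> powr (- a) / (1 - r)"
  have "S0 > 0" using r e0 by (simp add: S0_def)
  moreover have "(\<Sum>k\<le>N. exp (- q * k) * (1 + real k) powr a) \<le> S0" for N
  proof -
    have "(\<Sum>k\<le>N. exp (- q * k) * (1 + real k) powr a) \<le> (\<Sum>k\<le>N. \<epsilon> powr (- a) * r ^ k)"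
      by (intro sum_mono tm)
    also have "\<dots> = \<epsilon> powr (- a) * (\<Sum>k\<le>N. r ^ k)" by (simp add: sum_distrib_left)
    also have "\<dots> \<le> \<epsilon> powr (- a) * (1 / (1 - r))"
      using geometric_sum_less[OF r, of "{..N}"] e0 by (intro mult_left_mono) auto
    finally show ?thesis by (simp add: S0_def)
  qed
  ultimately show ?thesis by blast
qed

lemma radial_bound:
  fixes R0 \<beta> q c :: real
  assumes R0: "R0 > 0" and beta: "\<beta> \<ge> 0" and q: "q > 0" and c: "c \<ge> 0"
  shows "\<exists>C>0. \<forall>T (S :: (real^'n) set) f. T \<ge> R0 \<longrightarrow> S \<subseteq> cball 0 T \<longrightarrow> S \<in> sets lebesgue \<longrightarrow> f integrable_on S
     \<longrightarrow> (\<forall>x\<in>S. f x \<le> c * (1 + norm x) powr (- \<beta>) * exp (q * (norm x - T)))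
     \<longrightarrow> integral S f \<le> C * T powr (real CARD('n) - 1 - \<beta>)"
proof -
  define n where "n = CARD('n)"
  have n1: "n \<ge> 1" unfolding n_def by (simp add: Suc_leI)
  define \<omega> where "\<omega> = measure lborel (ball (0::real^'n) 1)"
  have \<omega>0: "\<omega> \<ge> 0" unfolding \<omega>_def by simp
  define \<gamma> where "\<gamma> = real n - 1 - \<beta>"
  obtain S0 where S0: "S0 > 0" "\<forall>N. (\<Sum>k\<le>N. exp (- q * k) * (1 + real k) powr \<bar>\<gamma>\<bar>) \<le> S0"
    using expsum_bound[OF q, of "\<bar>\<gamma>\<bar>"] by auto
  define C4 where "C4 = max 1 (R0 powr (- \<gamma>))"
  have C4: "C4 \<ge> 1" unfolding C4_def by simp
  define C where "C = c * \<omega> * n * C4 * S0 + 1"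
  have Cpos: "C > 0" unfolding C_def using c \<omega>0 C4 S0 by (simp add: add_nonneg_pos)
  have main: "integral S f \<le> C * T powr \<gamma>"
    if T: "T \<ge> R0" and Sb: "S \<subseteq> cball 0 T" and Sm: "S \<in> sets lebesgue" and fi: "f integrable_on S"
      and fb: "\<forall>x\<in>S. f x \<le> c * (1 + norm x) powr (- \<beta>) * exp (q * (norm x - T))"
    for T and S :: "(real^'n) set" and f
  proof -
    have T0: "T > 0" using T R0 by linarith
    define N where "N = nat \<lceil>T\<rceil>"
    define A where "A k = cball (0::real^'n) (T - real k) - cball 0 (T - real k - 1)" for k :: nat
    define D where "D k = (if T - real k \<ge> 1 then (T - real k) powr \<gamma> else 1)" for k :: nat
    define b where "b k = c * exp (- q * k) * (if T - real k \<ge> 1 then (T - real k) powr (- \<beta>) else 1)" for k :: nat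
    have b0: "b k \<ge> 0" for k using c unfolding b_def by auto
    define st where "st x = (\<Sum>k\<le>N. b k * indicat_real (A k) x)" for x
    have Am: "A k \<in> sets lebesgue" for k unfolding A_def by (intro sets.Diff) auto
    have ASm: "A k \<inter> S \<in> lmeasurable" for k
      using Am Sm Sb by (intro bounded_set_imp_lmeasurable) (auto intro: bounded_subset[of "cball 0 T"])
    have fst: "f x \<le> st x" if x: "x \<in> S" for x
    proof -
      define r where "r = norm x"
      have r: "r \<ge> 0" "r \<le> T" using x Sb by (auto simp: r_def)
      define k0 where "k0 = nat \<lfloor>T - r\<rfloor>"
      have k0: "real k0 \<le> T - r" "T - r < real k0 + 1"
        using r by (auto simp: k0_def)
      have k0N: "k0 \<le> N"
      proof -
        have "real_of_int \<lfloor>T - r\<rfloor> \<le> real_of_int \<lceil>T\<rceil>"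
          using r of_int_floor_le[of "T - r"] le_of_int_ceiling[of T] by linarith
        hence "\<lfloor>T - r\<rfloor> \<le> \<lceil>T\<rceil>" by simp
        thus ?thesis unfolding N_def k0_def by (rule nat_mono)
      qed
      have xA: "x \<in> A k0" using k0 unfolding A_def r_def by auto
      have "q * (r - T) \<le> q * (- real k0)" using k0 q by (intro mult_left_mono) auto
      hence e: "exp (q * (r - T)) \<le> exp (- q * k0)" by simp
      have p: "(1 + r) powr (- \<beta>) \<le> (if T - real k0 \<ge> 1 then (T - real k0) powr (- \<beta>) else 1)"
      proof (cases "T - real k0 \<ge> 1")
        case True
        have "(1 + r) powr (- \<beta>) \<le> (T - real k0) powr (- \<beta>)" using True k0 beta by (intro powr_mono2') auto
        thus ?thesis using True by simp
      next
        case False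
        have "(1 + r) powr (- \<beta>) \<le> 1 powr (- \<beta>)" using r beta by (intro powr_mono2') auto
        thus ?thesis using False by simp
      qed
      have "f x \<le> c * (1 + r) powr (- \<beta>) * exp (q * (r - T))" using fb x by (simp add: r_def)
      also have "\<dots> \<le> b k0"
      proof -
        have "(1 + r) powr (- \<beta>) * exp (q * (r - T)) \<le> (if T - real k0 \<ge> 1 then (T - real k0) powr (- \<beta>) else 1) * exp (- q * k0)"
          by (rule mult_mono[OF p e]) auto
        hence "c * ((1 + r) powr (- \<beta>) * exp (q * (r - T))) \<le> c * ((if T - real k0 \<ge> 1 then (T - real k0) powr (- \<beta>) else 1) * exp (- q * k0))"
          using c by (rule mult_left_mono)
        thus ?thesis unfolding b_def by (simp only: mult.assoc mult.commute mult.left_commute)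
      qed
      also have "\<dots> = b k0 * indicat_real (A k0) x" using xA by simp
      also have "\<dots> \<le> st x" unfolding st_def using k0N b0
        by (intro member_le_sum) auto
      finally show ?thesis .
    qed
    have ii: "(\<lambda>x. b k * indicat_real (A k) x) integrable_on S" for k
    proof -
      have "indicat_real (A k) integrable_on S" using integrable_on_indicator ASm by blast
      thus ?thesis by (rule integrable_on_mult_right)
    qed
    have sti: "st integrable_on S" unfolding st_def
      by (intro integrable_sum ii) auto
    have "integral S f \<le> integral S st" using fi sti fst by (rule integral_le)
    also have "integral S st = (\<Sum>k\<le>N. b k * measure lebesgue (A k \<inter> S))"
    proof -
      have "integral S st = (\<Sum>k\<le>N. integral S (\<lambda>x. b k * indicat_real (A k) x))"
        unfolding st_def by (intro integral_sum ii) auto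
      also have "\<dots> = (\<Sum>k\<le>N. b k * measure lebesgue (A k \<inter> S))"
        by (intro sum.cong refl) (simp add: integral_indicator ASm)
      finally show ?thesis .
    qed
    also have "\<dots> \<le> (\<Sum>k\<le>N. c * \<omega> * n * (exp (- q * k) * D k))"
    proof (rule sum_mono)
      fix k assume "k \<in> {..N}"
      have mA: "measure lebesgue (A k \<inter> S) \<le> measure lebesgue (A k)"
        using ASm Am Sb by (intro measure_mono_fmeasurable) (auto intro: bounded_set_imp_lmeasurable simp: A_def)
      show "b k * measure lebesgue (A k \<inter> S) \<le> c * \<omega> * n * (exp (- q * k) * D k)"
      proof (cases "T - real k \<ge> 1")
        case True
        define a where "a = T - real k"
        have a1: "a \<ge> 1" using True by (simp add: a_def)
        have "measure lebesgue (A k) = measure lebesgue (cball (0::real^'n) a) - measure lebesgue (cball (0::real^'n) (a - 1))"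
          unfolding A_def a_def by (intro measure_Diff) (use lmeasurable_cball[of "0::real^'n" "T - real k"] in \<open>auto simp: fmeasurable_def\<close>)
        also have "\<dots> = a ^ n * \<omega> - (a - 1) ^ n * \<omega>"
          using a1 unfolding \<omega>_def n_def by (subst meas_cball, simp)+ (rule refl)
        also have "\<dots> = \<omega> * (a ^ n - (a - 1) ^ n)" by (simp add: algebra_simps)
        also have "\<dots> \<le> \<omega> * (n * a ^ (n - 1) * (a - (a - 1)))"
          using a1 n1 \<omega>0 by (intro mult_left_mono power_diff_le) auto
        finally have mA': "measure lebesgue (A k) \<le> \<omega> * n * a ^ (n - 1)" by simp
        have "b k * measure lebesgue (A k \<inter> S) \<le> b k * (\<omega> * n * a ^ (n - 1))"
          using mA mA' b0 by (intro mult_left_mono) auto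
        also have "\<dots> = c * \<omega> * n * (exp (- q * k) * (a powr (- \<beta>) * a powr (real (n - 1))))"
          unfolding b_def using True a1 by (simp add: a_def powr_realpow)
        also have "a powr (- \<beta>) * a powr (real (n - 1)) = D k"
          unfolding D_def \<gamma>_def using True a1 n1 by (simp add: a_def powr_add[symmetric] of_nat_diff)
        finally show ?thesis .
      next
        case False
        have "A k \<subseteq> cball 0 1" using False unfolding A_def by auto
        hence "measure lebesgue (A k) \<le> measure lebesgue (cball (0::real^'n) 1)"
          using Am by (intro measure_mono_fmeasurable) auto
        also have "\<dots> = \<omega>" unfolding \<omega>_def by (subst meas_cball) simp_all
        finally have "measure lebesgue (A k \<inter> S) \<le> \<omega> * n" using mA n1 \<omega>0
          by (smt (verit) mult_left_mono mult_cancel_left1 of_nat_1 of_nat_mono)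
        hence "b k * measure lebesgue (A k \<inter> S) \<le> b k * (\<omega> * n)" using b0 by (intro mult_left_mono) auto
        also have "\<dots> = c * \<omega> * n * (exp (- q * k) * D k)" unfolding b_def D_def using False by simp
        finally show ?thesis .
      qed
    qed
    also have "\<dots> \<le> (\<Sum>k\<le>N. c * \<omega> * n * (exp (- q * k) * (C4 * (T powr \<gamma> * (1 + real k) powr \<bar>\<gamma>\<bar>))))"
    proof (rule sum_mono)
      fix k assume "k \<in> {..N}"
      have "D k \<le> C4 * (T powr \<gamma> * (1 + real k) powr \<bar>\<gamma>\<bar>)"
        unfolding D_def C4_def using D_bound[OF R0 T] by blast
      thus "c * \<omega> * n * (exp (- q * k) * D k) \<le> c * \<omega> * n * (exp (- q * k) * (C4 * (T powr \<gamma> * (1 + real k) powr \<bar>\<gamma>\<bar>)))"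
        using c \<omega>0 by (intro mult_left_mono) auto
    qed
    also have "\<dots> = c * \<omega> * n * C4 * T powr \<gamma> * (\<Sum>k\<le>N. exp (- q * k) * (1 + real k) powr \<bar>\<gamma>\<bar>)"
      by (simp add: sum_distrib_left algebra_simps)
    also have "\<dots> \<le> c * \<omega> * n * C4 * T powr \<gamma> * S0"
      using S0 c \<omega>0 C4 by (intro mult_left_mono) auto
    also have "\<dots> \<le> C * T powr \<gamma>" unfolding C_def by (simp add: algebra_simps)
    finally show ?thesis .
  qed
  show ?thesis using Cpos main unfolding \<gamma>_def n_def by blast
qed

lemma phi0_lower:
  fixes \<Omega> :: "(real^'n) set" and \<phi>0 :: "real^'n \<Rightarrow> real"
  assumes Osub: "\<Omega> \<subseteq> ball 0 R" and cont: "continuous_on (- \<Omega>) \<phi>0"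
    and pos: "\<forall>x\<in>- \<Omega>. 0 < \<phi>0 x" and lim: "(\<phi>0 \<longlongrightarrow> 1) at_infinity"
  shows "\<exists>c0>0. \<forall>x. norm x \<ge> R \<longrightarrow> \<phi>0 x \<ge> c0"
proof -
  have "eventually (\<lambda>x. \<phi>0 x > 1/2) at_infinity"
    using lim by (rule order_tendstoD) simp
  then obtain B where B: "\<forall>x. B \<le> norm x \<longrightarrow> \<phi>0 x > 1/2" unfolding eventually_at_infinity by blast
  define Ann where "Ann = cball (0::real^'n) (max B R) \<inter> - ball 0 R"
  have Ac: "compact Ann" unfolding Ann_def by (intro compact_Int_closed) auto
  have AO: "Ann \<subseteq> - \<Omega>" using Osub unfolding Ann_def by auto
  have "continuous_on Ann (\<lambda>x. 1 / \<phi>0 x)"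
  proof (intro continuous_on_divide continuous_on_const continuous_on_subset[OF cont AO] ballI)
    fix x assume "x \<in> Ann"
    hence "x \<in> - \<Omega>" using AO by blast
    thus "\<phi>0 x \<noteq> 0" using pos by force
  qed
  hence "bounded ((\<lambda>x. 1 / \<phi>0 x) ` Ann)" by (intro compact_imp_bounded compact_continuous_image Ac)
  then obtain M where M: "\<forall>x\<in>Ann. norm (1 / \<phi>0 x) \<le> M" unfolding bounded_iff by auto
  define c0 where "c0 = min (1/2) (1 / max M 1)"
  have c0: "c0 > 0" by (simp add: c0_def)
  have "\<phi>0 x \<ge> c0" if x: "norm x \<ge> R" for x
  proof (cases "norm x \<ge> B")
    case True thus ?thesis using B unfolding c0_def by force
  next
    case False
    hence xA: "x \<in> Ann" using x unfolding Ann_def by auto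
    have p: "\<phi>0 x > 0" using pos AO xA by auto
    have "1 / \<phi>0 x \<le> max M 1" using M xA p by force
    hence "1 / max M 1 \<le> \<phi>0 x" using p by (simp add: field_simps)
    thus ?thesis unfolding c0_def by linarith
  qed
  thus ?thesis using c0 by blast
qed

lemma pointwise:
  fixes p R C1 K c0 t m u0 u1 r :: real
  assumes p: "p > 1" and R: "R > 0" and C1: "C1 > 0" and K: "K > 0" and c0: "c0 > 0" and t: "t \<ge> 0"
    and m: "m \<ge> 1" and u0: "u0 > 0" and u1: "u1 > 0" and r: "r \<ge> 0"
    and b1: "u1 \<le> C1 * (1 + r) powr (- (m - 1) / 2) * exp r"
    and far: "r \<ge> R \<longrightarrow> u0 \<ge> c0" and near: "r < R \<longrightarrow> u1 \<le> K * u0"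
  shows "u0 powr (- 1 / (p - 1)) * (u1 * exp (- t)) powr (p / (p - 1))
     \<le> max (c0 powr (- 1 / (p - 1)) * C1 powr (p / (p - 1)))
            (K powr (1 / (p - 1)) * C1 * exp R * (1 + R) powr ((m - 1) * (p / (p - 1)) / 2))
       * ((1 + r) powr (- ((m - 1) * (p / (p - 1)) / 2)) * exp (p / (p - 1) * (r - t)))"
    (is "?f \<le> max ?Ca ?Cb * ?G")
proof -
  define P where "P = p / (p - 1)"
  define a where "a = 1 / (p - 1)"
  define \<beta> where "\<beta> = (m - 1) * P / 2"
  have P0: "P > 0" "P = 1 + a" using p by (auto simp: P_def a_def field_simps)
  have a0: "a > 0" using p by (simp add: a_def)
  have ma: "- 1 / (p - 1) = - a" by (simp add: a_def)
  have b0: "\<beta> \<ge> 0" using m P0 by (simp add: \<beta>_def)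
  have G0: "?G \<ge> 0" by simp
  have Ca0: "?Ca \<ge> 0" by simp
  have Cb0: "?Cb \<ge> 0" using C1 by (intro mult_nonneg_nonneg) auto
  have B1: "(1 + r) powr (- (m - 1) / 2) \<le> 1" using powr_mono2'[of "- (m - 1) / 2" 1 "1 + r"] m r by simp
  show ?thesis
  proof (cases "r \<ge> R")
    case True
    have h0: "u0 powr (- a) \<le> c0 powr (- a)" using far True c0 a0 by (intro powr_mono2') auto
    have "u1 * exp (- t) \<le> (C1 * (1 + r) powr (- (m - 1) / 2) * exp r) * exp (- t)"
      using b1 by (rule mult_right_mono) simp
    also have "\<dots> = C1 * (1 + r) powr (- (m - 1) / 2) * exp (r - t)"
      by (simp add: mult.assoc exp_add[symmetric])
    finally have "u1 * exp (- t) \<le> C1 * (1 + r) powr (- (m - 1) / 2) * exp (r - t)" .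
    hence "(u1 * exp (- t)) powr P \<le> (C1 * (1 + r) powr (- (m - 1) / 2) * exp (r - t)) powr P"
      using u1 P0 by (intro powr_mono2) auto
    also have "\<dots> = C1 powr P * ((1 + r) powr (- (m - 1) / 2)) powr P * exp (r - t) powr P"
      using C1 by (simp add: powr_mult)
    also have "\<dots> = C1 powr P * ((1 + r) powr (- \<beta>) * exp (P * (r - t)))"
    proof -
      have eqx: "- (m - 1) / 2 * P = - \<beta>" by (simp add: \<beta>_def field_simps)
      show ?thesis by (simp only: powr_powr exp_powr_real eqx) (simp add: mult.assoc mult.commute[of "r - t" P])
    qed
    finally have h1: "(u1 * exp (- t)) powr P \<le> C1 powr P * ((1 + r) powr (- \<beta>) * exp (P * (r - t)))" .
    have "?f = u0 powr (- a) * (u1 * exp (- t)) powr P" by (simp add: a_def P_def)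
    also have "\<dots> \<le> c0 powr (- a) * (C1 powr P * ((1 + r) powr (- \<beta>) * exp (P * (r - t))))"
      by (intro mult_mono h0 h1) auto
    also have "\<dots> = ?Ca * ?G" by (simp add: a_def P_def \<beta>_def mult.assoc)
    also have "\<dots> \<le> max ?Ca ?Cb * ?G" using G0 by (intro mult_right_mono) auto
    finally show ?thesis .
  next
    case False
    have Ku: "u1 / K \<le> u0" using near False K by (simp add: divide_le_eq mult.commute)
    have h0: "u0 powr (- a) \<le> (u1 / K) powr (- a)" using Ku u1 K a0 by (intro powr_mono2') auto
    also have "\<dots> = u1 powr (- a) / K powr (- a)" using u1 K by (simp add: powr_divide)
    also have "\<dots> = K powr a * u1 powr (- a)" by (simp add: powr_minus_divide)
    finally have h0': "u0 powr (- a) \<le> K powr a * u1 powr (- a)" .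
    have "?f = u0 powr (- a) * (u1 powr P * exp (- t * P))" using u1
      by (simp add: a_def P_def powr_mult exp_powr_real)
    also have "\<dots> \<le> K powr a * u1 powr (- a) * (u1 powr P * exp (- t * P))"
      by (intro mult_right_mono h0') auto
    also have "\<dots> = K powr a * (u1 powr (- a) * u1 powr P) * exp (- t * P)" by (simp add: mult.assoc)
    also have "u1 powr (- a) * u1 powr P = u1" using u1 P0 by (simp add: powr_add[symmetric])
    also have "u1 \<le> C1 * exp R"
    proof -
      have "u1 \<le> C1 * (1 + r) powr (- (m - 1) / 2) * exp r" by (rule b1)
      also have "\<dots> \<le> C1 * 1 * exp R" using C1 B1 False by (intro mult_mono) auto
      finally show ?thesis by simp
    qed
    hence "K powr a * u1 * exp (- t * P) \<le> K powr a * (C1 * exp R) * exp (- t * P)"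
      by (intro mult_right_mono mult_left_mono) auto
    also have "\<dots> = ?Cb * ((1 + R) powr (- \<beta>) * exp (P * (0 - t)))"
    proof -
      have "(1 + R) powr \<beta> * (1 + R) powr (- \<beta>) = 1" using R by (simp add: powr_add[symmetric])
      thus ?thesis by (simp add: a_def P_def \<beta>_def algebra_simps)
    qed
    also have "\<dots> \<le> ?Cb * ?G"
    proof (intro mult_left_mono mult_mono)
      show "(1 + R) powr (- \<beta>) \<le> (1 + r) powr (- ((m - 1) * (p / (p - 1)) / 2))"
        unfolding \<beta>_def P_def using False r b0 by (intro powr_mono2') (auto simp: \<beta>_def P_def)
      show "exp (P * (0 - t)) \<le> exp (p / (p - 1) * (r - t))"
        unfolding P_def using r p by (intro exp_mono mult_left_mono) auto
    qed (use Cb0 in auto)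
    also have "\<dots> \<le> max ?Ca ?Cb * ?G" using G0 by (intro mult_right_mono) auto
    finally show ?thesis
      by (smt (verit) \<open>?f = u0 powr (- a) * (u1 powr P * exp (- t * P))\<close> h0' mult_right_mono)
  qed
qed

theorem lemma2p5:
  fixes \<Omega> :: "(real^'n) set" and R p :: real
    and A :: "real^'n \<Rightarrow> real^'n^'n" and \<phi>0 \<phi>1 :: "real^'n \<Rightarrow> real"
  assumes n3: "CARD('n) \<ge> 3"
    and p: "p > 1"
    and Omega_compact: "compact \<Omega>"
    and Omega_smooth: "smooth_boundary \<Omega>"
    and Omega_ext: "exterior_ball_condition \<Omega>"
    and R: "R > 0" and zero_in: "0 \<in> \<Omega>" and Omega_sub: "\<Omega> \<subseteq> ball 0 R"
    and A_smooth: "\<exists>U. open U \<and> closure (- \<Omega>) \<subseteq> U \<and> (\<forall>i j. smooth_on U (\<lambda>x. A x $ i $ j))"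
    and A_sym: "\<forall>x\<in>- \<Omega>. \<forall>i j. A x $ i $ j = A x $ j $ i"
    and A_ell: "\<exists>C>0. \<forall>x\<in>- \<Omega>. \<forall>\<xi>::real^'n.
                  (1 / C) * (norm \<xi>)\<^sup>2 \<le> (\<Sum>i\<in>UNIV. \<Sum>j\<in>UNIV. A x $ i $ j * \<xi> $ i * \<xi> $ j)
                \<and> (\<Sum>i\<in>UNIV. \<Sum>j\<in>UNIV. A x $ i $ j * \<xi> $ i * \<xi> $ j) \<le> C * (norm \<xi>)\<^sup>2"
    and A_flat: "\<forall>x. norm x \<ge> R \<longrightarrow> A x = mat 1"
    and phi0_C2: "Ck_on 2 (- \<Omega>) \<phi>0" and phi0_cont: "continuous_on (closure (- \<Omega>)) \<phi>0"
    and phi0_eq: "\<forall>x\<in>- \<Omega>. div_op A \<phi>0 x = 0"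
    and phi0_bd: "\<forall>x\<in>frontier \<Omega>. \<phi>0 x = 0"
    and phi0_inf: "(\<phi>0 \<longlongrightarrow> 1) at_infinity"
    and phi0_pos: "\<forall>x\<in>- \<Omega>. 0 < \<phi>0 x \<and> \<phi>0 x < 1"
    and phi1_C2: "Ck_on 2 (- \<Omega>) \<phi>1" and phi1_cont: "continuous_on (closure (- \<Omega>)) \<phi>1"
    and phi1_eq: "\<forall>x\<in>- \<Omega>. div_op A \<phi>1 x = \<phi>1 x"
    and phi1_bd: "\<forall>x\<in>frontier \<Omega>. \<phi>1 x = 0"
    and phi1_inf: "((\<lambda>x. \<phi>1 x - sphere_integral (\<lambda>\<omega>. exp (x \<bullet> \<omega>))) \<longlongrightarrow> 0) at_infinity"
    and phi1_pos: "\<exists>C1>0. \<forall>x\<in>- \<Omega>. 0 < \<phi>1 x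
                     \<and> \<phi>1 x \<le> C1 * (1 + norm x) powr (- (real CARD('n) - 1) / 2) * exp (norm x)"
  shows "\<exists>C>0. \<forall>t\<ge>0.
     let \<psi>1 = (\<lambda>x. \<phi>1 x * exp (- t));
         S = {x. x \<notin> \<Omega> \<and> norm x \<le> t + R};
         f = (\<lambda>x. \<phi>0 x powr (- 1 / (p - 1)) * \<psi>1 x powr (p / (p - 1)))
     in f integrable_on S \<and>
        integral S f \<le> C * (t + R) powr (real CARD('n) - 1 - (real CARD('n) - 1) * (p / (p - 1)) / 2)"
proof -
  have opn: "open (- \<Omega>)" using Omega_compact compact_imp_closed by blast
  obtain U where U: "open U" "closure (- \<Omega>) \<subseteq> U" "\<forall>i j. smooth_on U (\<lambda>x. A x $ i $ j)"
    using A_smooth by blast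
  have dA: "\<forall>x\<in>- \<Omega>. \<forall>i j. (\<lambda>y. A y $ i $ j) differentiable (at x)"
  proof (intro ballI allI)
    fix x i j assume x: "x \<in> - \<Omega>"
    have "Ck_on (Suc 0) U (\<lambda>x. A x $ i $ j)" using U(3) unfolding smooth_on_def by blast
    moreover have "x \<in> U" using x U(2) closure_subset[of "- \<Omega>"] by blast
    ultimately show "(\<lambda>y. A y $ i $ j) differentiable (at x)" by simp
  qed
  obtain CA where CA: "CA > 0" "\<forall>x\<in>- \<Omega>. \<forall>\<xi>::real^'n.
                  (1 / CA) * (norm \<xi>)\<^sup>2 \<le> (\<Sum>i\<in>UNIV. \<Sum>j\<in>UNIV. A x $ i $ j * \<xi> $ i * \<xi> $ j)"
    using A_ell by blast
  have A_psd: "\<forall>x\<in>- \<Omega>. \<forall>\<xi>::real^'n. 0 \<le> (\<Sum>i\<in>UNIV. \<Sum>j\<in>UNIV. A x $ i $ j * \<xi> $ i * \<xi> $ j)"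
  proof (intro ballI allI)
    fix x and \<xi> :: "real^'n" assume "x \<in> - \<Omega>"
    hence "(1 / CA) * (norm \<xi>)\<^sup>2 \<le> (\<Sum>i\<in>UNIV. \<Sum>j\<in>UNIV. A x $ i $ j * \<xi> $ i * \<xi> $ j)" using CA by blast
    moreover have "(1 / CA) * (norm \<xi>)\<^sup>2 \<ge> 0" using CA by simp
    ultimately show "0 \<le> (\<Sum>i\<in>UNIV. \<Sum>j\<in>UNIV. A x $ i $ j * \<xi> $ i * \<xi> $ j)" by linarith
  qed
  have p0pos: "\<forall>x\<in>- \<Omega>. 0 < \<phi>0 x" using phi0_pos by blast
  obtain C1 where C1: "C1 > 0" "\<forall>x\<in>- \<Omega>. 0 < \<phi>1 x
                     \<and> \<phi>1 x \<le> C1 * (1 + norm x) powr (- (real CARD('n) - 1) / 2) * exp (norm x)"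
    using phi1_pos by blast
  have p1pos: "\<forall>x\<in>- \<Omega>. 0 < \<phi>1 x" using C1 by blast
  obtain K where K: "K > 0" "\<forall>x\<in>- \<Omega>. norm x \<le> R \<longrightarrow> \<phi>1 x \<le> K * \<phi>0 x"
    using comparison[OF Omega_compact R Omega_sub dA A_sym A_psd phi0_C2 phi0_cont phi0_eq phi0_bd p0pos
        phi1_C2 phi1_cont phi1_eq phi1_bd p1pos] by blast
  have c0cont: "continuous_on (- \<Omega>) \<phi>0" using phi0_C2 by (simp add: numeral_2_eq_2)
  have c1cont: "continuous_on (- \<Omega>) \<phi>1" using phi1_C2 by (simp add: numeral_2_eq_2)
  obtain c0 where c0: "c0 > 0" "\<forall>x. norm x \<ge> R \<longrightarrow> \<phi>0 x \<ge> c0"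
    using phi0_lower[OF Omega_sub c0cont p0pos phi0_inf] by blast
  define P where "P = p / (p - 1)"
  have P0: "P > 0" using p by (simp add: P_def)
  define \<beta> where "\<beta> = (real CARD('n) - 1) * (p / (p - 1)) / 2"
  have b0: "\<beta> \<ge> 0" using p by (simp add: \<beta>_def Suc_leI)
  define C3 where "C3 = max (c0 powr (- 1 / (p - 1)) * C1 powr (p / (p - 1)))
            (K powr (1 / (p - 1)) * C1 * exp R * (1 + R) powr ((real CARD('n) - 1) * (p / (p - 1)) / 2))"
  have C30: "C3 \<ge> 0" unfolding C3_def by (rule order_trans[OF _ max.cobounded1]) simp
  obtain Crad where Crad: "Crad > 0" "\<forall>T (S :: (real^'n) set) f. T \<ge> R \<longrightarrow> S \<subseteq> cball 0 T \<longrightarrow> S \<in> sets lebesgue \<longrightarrow> f integrable_on S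
     \<longrightarrow> (\<forall>x\<in>S. f x \<le> (C3 * exp (P * R)) * (1 + norm x) powr (- \<beta>) * exp (P * (norm x - T)))
     \<longrightarrow> integral S f \<le> Crad * T powr (real CARD('n) - 1 - \<beta>)"
    using radial_bound[OF R b0 P0, of "C3 * exp (P * R)"] C30 by auto
  have Oleb: "- \<Omega> \<in> sets lebesgue"
    using sets_completionI_sets[of "- \<Omega>" lborel] borel_open[OF opn] by simp
  have "\<forall>t\<ge>0.
     let \<psi>1 = (\<lambda>x. \<phi>1 x * exp (- t));
         S = {x. x \<notin> \<Omega> \<and> norm x \<le> t + R};
         f = (\<lambda>x. \<phi>0 x powr (- 1 / (p - 1)) * \<psi>1 x powr (p / (p - 1)))
     in f integrable_on S \<and>
        integral S f \<le> Crad * (t + R) powr (real CARD('n) - 1 - (real CARD('n) - 1) * (p / (p - 1)) / 2)"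
  proof (intro allI impI)
    fix t :: real assume t: "t \<ge> 0"
    define S where "S = {x::real^'n. x \<notin> \<Omega> \<and> norm x \<le> t + R}"
    define f where "f = (\<lambda>x. \<phi>0 x powr (- 1 / (p - 1)) * (\<phi>1 x * exp (- t)) powr (p / (p - 1)))"
    have Seq: "S = - \<Omega> \<inter> cball 0 (t + R)" unfolding S_def by auto
    have Sb: "S \<subseteq> cball 0 (t + R)" unfolding Seq by blast
    have Sm: "S \<in> sets lebesgue" unfolding Seq using Oleb by (intro sets.Int) auto
    have Sl: "S \<in> lmeasurable" using Sb Sm by (intro bounded_set_imp_lmeasurable) (auto intro: bounded_subset[of "cball 0 (t + R)"])
    have SO: "S \<subseteq> - \<Omega>" unfolding Seq by blast
    have fb: "f x \<le> (C3 * exp (P * R)) * (1 + norm x) powr (- \<beta>) * exp (P * (norm x - (t + R)))"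
      if x: "x \<in> S" for x
    proof -
      have xO: "x \<in> - \<Omega>" using x SO by blast
      have "f x \<le> C3 * ((1 + norm x) powr (- ((real CARD('n) - 1) * (p / (p - 1)) / 2)) * exp (p / (p - 1) * (norm x - t)))"
        unfolding f_def C3_def
      proof (rule pointwise[OF p R C1(1) K(1) c0(1) t])
        show "1 \<le> real CARD('n)" by (simp add: Suc_leI)
        show "0 < \<phi>0 x" using p0pos xO by blast
        show "0 < \<phi>1 x" using p1pos xO by blast
        show "0 \<le> norm x" by simp
        show "\<phi>1 x \<le> C1 * (1 + norm x) powr (- (real CARD('n) - 1) / 2) * exp (norm x)" using C1 xO by blast
        show "R \<le> norm x \<longrightarrow> c0 \<le> \<phi>0 x" using c0 by blast
        show "norm x < R \<longrightarrow> \<phi>1 x \<le> K * \<phi>0 x" using K xO by auto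
      qed
      also have "\<dots> = (C3 * exp (P * R)) * (1 + norm x) powr (- \<beta>) * exp (P * (norm x - (t + R)))"
      proof -
        have e1: "P * (norm x - t) = P * R + P * (norm x - (t + R))" by (simp add: algebra_simps)
        have "exp (P * (norm x - t)) = exp (P * R) * exp (P * (norm x - (t + R)))"
          by (simp only: e1 exp_add)
        hence "exp (p / (p - 1) * (norm x - t)) = exp (P * R) * exp (P * (norm x - (t + R)))"
          unfolding P_def .
        thus ?thesis by (simp add: \<beta>_def)
      qed
      finally show ?thesis .
    qed
    have f0: "f x \<ge> 0" for x unfolding f_def by simp
    have fbd: "norm (f x) \<le> C3 * exp (P * R)" if x: "x \<in> S" for x
    proof -
      have r: "norm x \<le> t + R" using x unfolding S_def by auto
      have "(1 + norm x) powr (- \<beta>) \<le> 1" using powr_mono2'[of "- \<beta>" 1 "1 + norm x"] b0 by simp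
      moreover have "exp (P * (norm x - (t + R))) \<le> 1" using r P0 by (simp add: mult_nonneg_nonpos)
      ultimately have "(1 + norm x) powr (- \<beta>) * exp (P * (norm x - (t + R))) \<le> 1 * 1"
        by (intro mult_mono) auto
      hence "(C3 * exp (P * R)) * ((1 + norm x) powr (- \<beta>) * exp (P * (norm x - (t + R)))) \<le> C3 * exp (P * R)"
        using C30 mult_left_mono[of _ 1 "C3 * exp (P * R)"] by simp
      thus ?thesis using fb[OF x] f0[of x] by (simp add: mult.assoc)
    qed
    have fc: "continuous_on (- \<Omega>) f" unfolding f_def
    proof (intro continuous_on_mult continuous_on_powr continuous_on_const continuous_on_exp c0cont c1cont ballI)
      fix x assume "x \<in> - \<Omega>"
      thus "\<phi>0 x \<noteq> 0" "\<phi>1 x * exp (- t) \<noteq> 0" using p0pos p1pos by force+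
    qed
    have fm: "f \<in> borel_measurable (lebesgue_on S)"
      by (rule continuous_imp_measurable_on_sets_lebesgue[OF continuous_on_subset[OF fc SO] Sm])
    have fi: "f integrable_on S"
      by (rule measurable_bounded_by_integrable_imp_integrable[OF fm integrable_on_const[OF Sl] fbd Sm])
    have "integral S f \<le> Crad * (t + R) powr (real CARD('n) - 1 - \<beta>)"
      using Crad(2) t R Sb Sm fi fb by auto
    thus "let \<psi>1 = (\<lambda>x. \<phi>1 x * exp (- t));
         S = {x. x \<notin> \<Omega> \<and> norm x \<le> t + R};
         f = (\<lambda>x. \<phi>0 x powr (- 1 / (p - 1)) * \<psi>1 x powr (p / (p - 1)))
     in f integrable_on S \<and>
        integral S f \<le> Crad * (t + R) powr (real CARD('n) - 1 - (real CARD('n) - 1) * (p / (p - 1)) / 2)"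
      using fi unfolding Let_def S_def f_def \<beta>_def by simp
  qed
  thus ?thesis using Crad(1) by blast
qed

end
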